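(* Let $(S_n)_{n\ge0}$ be defined by $S_0=3$, $S_1=1$, $S_2=3$ and $S_{n+1}=S_n+S_{n-1}+S_{n-2}$ for $n\ge 2$. Let $\alpha,\beta,\gamma$ be the roots of $x^3-x^2-x-1=0$ and $C_n=\alpha^n\beta^n+\alpha^n\gamma^n+\beta^n\gamma^n$ for $n\ge0$. Then for all $n\ge 2$, $$S_nS_{n-1}=S_{2n-1}+C_{n-1}-C_{n-2}.$$
   Context: $S_n$ is the generalized Lucas (generalized Tribonacci) sequence. *)

theory Defs
  imports Complex_Main
begin

fun S :: "nat \<Rightarrow> int" where
  "S 0 = 3"
| "S (Suc 0) = 1"
| "S (Suc (Suc 0)) = 3"
| "S (Suc (Suc (Suc n))) = S (Suc (Suc n)) + S (Suc n) + S n"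

definition C :: "complex \<Rightarrow> complex \<Rightarrow> complex \<Rightarrow> nat \<Rightarrow> complex" where
  "C a b c n = a ^ n * b ^ n + a ^ n * c ^ n + b ^ n * c ^ n"

end

theory Submission
  imports Defs
begin

lemma vieta:
  fixes a b c :: complex
  assumes "a \<noteq> b" "a \<noteq> c" "b \<noteq> c"
    and ha: "a ^ 3 - a ^ 2 - a - 1 = 0"
    and hb: "b ^ 3 - b ^ 2 - b - 1 = 0"
    and hc: "c ^ 3 - c ^ 2 - c - 1 = 0"
  shows "a + b + c = 1" "a*b + a*c + b*c = -1" "a*b*c = 1"
proof -
  have e1: "(a - b) * (a^2 + a*b + b^2 - (a+b) - 1) = 0"
    using ha hb by algebra
  have q1: "a^2 + a*b + b^2 - (a+b) - 1 = 0" using e1 assms(1) by simp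
  have e2: "(a - c) * (a^2 + a*c + c^2 - (a+c) - 1) = 0"
    using ha hc by algebra
  have q2: "a^2 + a*c + c^2 - (a+c) - 1 = 0" using e2 assms(2) by simp
  have "(b - c) * (a + b + c - 1) = 0" using q1 q2 by algebra
  then show s: "a + b + c = 1" using assms(3) by simp
  show s2: "a*b + a*c + b*c = -1" using q1 s by algebra
  show "a*b*c = 1" using ha s s2 by algebra
qed

lemma S_pow:
  fixes a b c :: complex
  assumes "a + b + c = 1" "a*b + a*c + b*c = -1" "a*b*c = 1"
  shows "of_int (S n) = a^n + b^n + c^n"
proof (induction n rule: S.induct)
  case 1 then show ?case by simp
next
  case 2 then show ?case using assms by simp
next
  case 3
  have "(3::complex) = a^2 + b^2 + c^2" using assms by algebra
  then show ?case by (simp add: eval_nat_numeral)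
next
  case (4 n)
  have r: "x^3 = x^2 + x + 1" if "x = a \<or> x = b \<or> x = c" for x
  proof -
    have "(x-a)*(x-b)*(x-c) = 0" using that by auto
    then show ?thesis using assms by algebra
  qed
  have "x^(n+3) = x^(n+2) + x^(n+1) + x^n" if "x = a \<or> x = b \<or> x = c" for x
  proof -
    have "x^(n+3) = x^n * x^3" by (simp add: power_add)
    also have "\<dots> = x^n * (x^2 + x + 1)" using r[OF that] by simp
    also have "\<dots> = x^(n+2) + x^(n+1) + x^n" by (simp add: algebra_simps power_add power2_eq_square)
    finally show ?thesis .
  qed
  then show ?case using 4 by (simp add: eval_nat_numeral algebra_simps)
qed

theorem mainTheorem4:
  fixes \<alpha> \<beta> \<gamma> :: complex and n :: nat
  assumes "\<alpha> \<noteq> \<beta>" and "\<alpha> \<noteq> \<gamma>" and "\<beta> \<noteq> \<gamma>"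
    and "\<alpha> ^ 3 - \<alpha> ^ 2 - \<alpha> - 1 = 0"
    and "\<beta> ^ 3 - \<beta> ^ 2 - \<beta> - 1 = 0"
    and "\<gamma> ^ 3 - \<gamma> ^ 2 - \<gamma> - 1 = 0"
    and "n \<ge> 2"
  shows "of_int (S n * S (n - 1)) =
           of_int (S (2 * n - 1)) + C \<alpha> \<beta> \<gamma> (n - 1) - C \<alpha> \<beta> \<gamma> (n - 2)"
proof -
  note v = vieta[OF assms(1-6)]
  note P = S_pow[OF v]
  obtain m where n: "n = m + 2" using assms(7) by (metis add.commute le_Suc_ex)
  have i1: "n - 1 = m + 1" "n - 2 = m" "2 * n - 1 = 2*m + 3" using n by auto
  let ?a = \<alpha> and ?b = \<beta> and ?c = \<gamma>
  have "of_int (S n * S (n - 1)) = (?a^(m+2) + ?b^(m+2) + ?c^(m+2)) * (?a^(m+1) + ?b^(m+1) + ?c^(m+1))"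
    using P unfolding i1 n by simp
  also have "\<dots> = (?a^(2*m+3) + ?b^(2*m+3) + ?c^(2*m+3))
      + (?a*?b)^(m+1) * (?a + ?b) + (?a*?c)^(m+1) * (?a + ?c) + (?b*?c)^(m+1) * (?b + ?c)"
    by (simp add: algebra_simps power_add power_mult_distrib mult_2 eval_nat_numeral)
  also have "\<dots> = (?a^(2*m+3) + ?b^(2*m+3) + ?c^(2*m+3))
      + (?a*?b)^(m+1) + (?a*?c)^(m+1) + (?b*?c)^(m+1)
      - ((?a*?b)^m * (?a*?b*?c) + (?a*?c)^m * (?a*?b*?c) + (?b*?c)^m * (?a*?b*?c))"
  proof -
    have k: "T + P*(a*b)*(a+b) + Q*(a*c)*(a+c) + R*(b*c)*(b+c) = T + P*(a*b)+Q*(a*c)+R*(b*c) - (P*(a*b*c)+Q*(a*b*c)+R*(a*b*c))"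
      if "a+b+c = 1" for T P Q R a b c :: complex
      using that by algebra
    have pw: "(x*y)^(m+1) = (x*y)^m * (x*y)" for x y :: complex by simp
    show ?thesis unfolding pw
      using  k[of ?a ?b ?c "?a^(2*m+3) + ?b^(2*m+3) + ?c^(2*m+3)" "(?a*?b)^m" "(?a*?c)^m" "(?b*?c)^m", OF v(1)]
      by (simp only: mult.assoc)
  qed
  also have "\<dots> = of_int (S (2 * n - 1)) + C ?a ?b ?c (n - 1) - C ?a ?b ?c (n - 2)"
    using P v(3) unfolding i1 C_def by (simp add: power_mult_distrib)
  finally show ?thesis .
qed

end
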